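(* Let $w\in\Sigma_{0,1,n}$. If there exists some planar expression for $w$, then the reduced expression of $w$ is planar, i.e. $w$ is a planar word.
   Context: $\Sigma_{0,1,n}$ is the free group on $t_1,\dots,t_n$; write $\overline t_k=t_k^{-1}$. Let $A$ be the set of $2n+2$ formal symbols $\overline z_1,t_1,\overline t_1,\dots,t_n,\overline t_n,z_1$, totally ordered by $\overline z_1<t_1<\overline t_1<t_2<\overline t_2<\dots<t_n<\overline t_n<z_1$. An expression for $w$ is a finite sequence $(a_1,\dots,a_m)$ of elements of $\{t_1^{\pm1},\dots,t_n^{\pm1}\}$ with $a_1\cdots a_m=w$, not necessarily reduced. Its Whitehead expansion is the $(2m+2)$-tuple $(c_1,\dots,c_{2m+2})=(\overline z_1,a_1,\overline a_1,a_2,\overline a_2,\dots,a_m,\overline a_m,z_1)$ of elements of $A$. Two $2$-element sets $\{a,b\},\{c,d\}$ of integers are nested if $a,b,c,d$ are distinct and either both or neither of $c,d$ lie strictly between $a$ and $b$. A family of such sets is nested if every two distinct members are nested. A $2M$-tuple $(c_1,\dots,c_{2M})$ of elements of $A$ is planar if there is a permutation $\pi$ of $\{1,\dots,2M\}$ satisfying three conditions: - $\pi(i)<\pi(j)$ implies $c_i\le c_j$; - the family $\{\{\pi(2i-1),\pi(2i)\}:1\le i\le M\}$ is nested; - the family $\{\{\pi(2i),\pi(2i+1)\}:1\le i\le M-1\}$ is nested. An expression is planar if its Whitehead expansion is planar. $w$ is a planar word if its unique reduced expression is planar. *)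

theory Defs
  imports Main
begin

text \<open>A letter of the free group on t_1..t_n: (k, True) is t_k, (k, False) is the inverse of t_k.\<close>
type_synonym letter = "nat \<times> bool"

definition letter_inv :: "letter \<Rightarrow> letter" where
  "letter_inv a = (fst a, \<not> snd a)"

fun freduce :: "letter list \<Rightarrow> letter list" where
  "freduce [] = []"
| "freduce (x # xs) =
     (case freduce xs of
        [] \<Rightarrow> [x]
      | y # ys \<Rightarrow> (if y = letter_inv x then ys else x # y # ys))"

definition expression_of :: "nat \<Rightarrow> letter list \<Rightarrow> bool" where
  "expression_of n e \<longleftrightarrow> (\<forall>a \<in> set e. 1 \<le> fst a \<and> fst a \<le> n)"

text \<open>The alphabet A is encoded order-preservingly in nat:
  zbar_1 = 0, t_k = 2k-1, tbar_k = 2k, z_1 = 2n+1.\<close>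
definition sym_rank :: "letter \<Rightarrow> nat" where
  "sym_rank a = (if snd a then 2 * fst a - 1 else 2 * fst a)"

definition whitehead_expansion :: "nat \<Rightarrow> letter list \<Rightarrow> nat list" where
  "whitehead_expansion n e =
     [0] @ concat (map (\<lambda>a. [sym_rank a, sym_rank (letter_inv a)]) e) @ [2 * n + 1]"

definition strictly_between :: "int \<Rightarrow> int \<Rightarrow> int \<Rightarrow> bool" where
  "strictly_between a b x \<longleftrightarrow> min a b < x \<and> x < max a b"

definition nested_pair :: "int \<Rightarrow> int \<Rightarrow> int \<Rightarrow> int \<Rightarrow> bool" where
  "nested_pair a b c d \<longleftrightarrow> distinct [a, b, c, d] \<and>
     (strictly_between a b c \<longleftrightarrow> strictly_between a b d)"

text \<open>Planarity of a 2M-tuple c (1-indexed: c_i = c ! (i-1)).\<close>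
definition planar_tuple :: "nat list \<Rightarrow> bool" where
  "planar_tuple c \<longleftrightarrow> even (length c) \<and>
    (let M = length c div 2 in
     \<exists>\<pi> :: nat \<Rightarrow> nat. bij_betw \<pi> {1..2*M} {1..2*M} \<and>
       (\<forall>i\<in>{1..2*M}. \<forall>j\<in>{1..2*M}. \<pi> i < \<pi> j \<longrightarrow> c ! (i - 1) \<le> c ! (j - 1)) \<and>
       (\<forall>i\<in>{1..M}. \<forall>j\<in>{1..M}. i \<noteq> j \<longrightarrow>
          nested_pair (int (\<pi> (2*i-1))) (int (\<pi> (2*i))) (int (\<pi> (2*j-1))) (int (\<pi> (2*j)))) \<and>
       (\<forall>i\<in>{1..M-1}. \<forall>j\<in>{1..M-1}. i \<noteq> j \<longrightarrow>
          nested_pair (int (\<pi> (2*i))) (int (\<pi> (2*i+1))) (int (\<pi> (2*j))) (int (\<pi> (2*j+1)))))"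

definition planar_expression :: "nat \<Rightarrow> letter list \<Rightarrow> bool" where
  "planar_expression n e \<longleftrightarrow> planar_tuple (whitehead_expansion n e)"

end

theory Submission
  imports Defs
begin


lemma sb_xor: "q \<noteq> a \<Longrightarrow> q \<noteq> b \<Longrightarrow> strictly_between a b q = ((a < q) \<noteq> (b < q))"
  unfolding strictly_between_def by auto

lemma sb_sym: "strictly_between a b q = strictly_between b a q"
  unfolding strictly_between_def by auto

lemma sb_end: "\<not> strictly_between a b a" "\<not> strictly_between a b b"
  unfolding strictly_between_def by auto

lemma nested_xor: "nested_pair a b c d \<longleftrightarrow> distinct [a,b,c,d] \<and>
   (((a<c) \<noteq> (b<c)) = ((a<d) \<noteq> (b<d)))"
  unfolding nested_pair_def using sb_xor[of c a b] sb_xor[of d a b] by auto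

lemma nested_sym: "nested_pair a b c d \<Longrightarrow> nested_pair c d a b"
  unfolding nested_xor by auto

lemma nested_sb: "nested_pair a b c d \<Longrightarrow> strictly_between a b c = strictly_between a b d"
  unfolding nested_pair_def by auto

fun red :: "letter list \<Rightarrow> bool" where
  "red [] = True" | "red [x] = True" | "red (x # y # ys) = (y \<noteq> letter_inv x \<and> red (y # ys))"

fun cancel :: "letter \<Rightarrow> letter list \<Rightarrow> letter list" where
  "cancel x [] = [x]" | "cancel x (y # ys) = (if y = letter_inv x then ys else x # y # ys)"

lemma freduce_cancel: "freduce (x # xs) = cancel x (freduce xs)"
  by (cases "freduce xs") auto

lemma inv_inv[simp]: "letter_inv (letter_inv a) = a"
  unfolding letter_inv_def by auto

lemma inv_eq_iff: "letter_inv a = letter_inv b \<longleftrightarrow> a = b"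
  by (metis inv_inv)

lemma red_tl: "red (x # xs) \<Longrightarrow> red xs"
  by (cases xs) auto

lemma red_cancel: "red w \<Longrightarrow> red (cancel x w)"
proof (cases w)
  case (Cons y ys) assume "red w" then show ?thesis using Cons by (cases ys) (auto intro: red_tl)
qed auto

lemma red_freduce: "red (freduce e)"
proof (induction e)
  case (Cons x e) then show ?case by (simp only: freduce_cancel red_cancel)
qed simp

lemma freduce_red: "red e \<Longrightarrow> freduce e = e"
proof (induction e rule: red.induct)
  case (3 x y ys) then show ?case by (simp add: freduce_cancel del: freduce.simps)
qed auto

lemma cancel_cancel: "red w \<Longrightarrow> cancel a (cancel (letter_inv a) w) = w"
proof (cases w)
  case (Cons y ys) assume r: "red w"
  show ?thesis
  proof (cases "y = a")
    case True
    then show ?thesis using Cons r by (cases ys) auto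
  next
    case False then show ?thesis using Cons by auto
  qed
qed auto

lemma freduce_step: "freduce (u @ [a, letter_inv a] @ v) = freduce (u @ v)"
proof (induction u)
  case Nil
  show ?case using cancel_cancel[OF red_freduce, of a v]
    by (simp add: freduce_cancel del: freduce.simps)
next
  case (Cons x u) then show ?case by (simp add: freduce_cancel del: freduce.simps)
qed

lemma not_red: "\<not> red e \<Longrightarrow> \<exists>j. 1 \<le> j \<and> j < length e \<and> e ! j = letter_inv (e ! (j-1))"
proof (induction e rule: red.induct)
  case (3 x y ys)
  show ?case
  proof (cases "y = letter_inv x")
    case True then show ?thesis by (intro exI[of _ 1]) auto
  next
    case False
    then obtain j where "1 \<le> j" "j < length (y#ys)" "(y#ys) ! j = letter_inv ((y#ys) ! (j-1))"
      using 3 by auto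
    then show ?thesis by (intro exI[of _ "Suc j"]) (auto simp: nth_Cons split: nat.splits)
  qed
qed auto

lemma split_cancel: "1 \<le> j \<Longrightarrow> j < length e \<Longrightarrow> e ! j = letter_inv (e ! (j-1)) \<Longrightarrow>
  e = take (j-1) e @ [e ! (j-1), letter_inv (e ! (j-1))] @ drop (j+1) e"
proof -
  assume a: "1 \<le> j" "j < length e" "e ! j = letter_inv (e ! (j-1))"
  have "e = take (j-1) e @ drop (j-1) e" by simp
  moreover have "drop (j-1) e = e ! (j-1) # e ! j # drop (j+1) e"
    using a by (metis Cons_nth_drop_Suc Suc_eq_plus1 Suc_lessD le_add_diff_inverse2 add_diff_cancel_left' plus_1_eq_Suc)
  ultimately show ?thesis using a by (metis append_Cons append_Nil)
qed




definition body :: "letter list \<Rightarrow> nat list" where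
  "body e = concat (map (\<lambda>a. [sym_rank a, sym_rank (letter_inv a)]) e)"

lemma body_Cons: "body (a # e) = sym_rank a # sym_rank (letter_inv a) # body e"
  by (simp add: body_def)

lemma length_body: "length (body e) = 2 * length e"
  by (induction e) (auto simp: body_def)

lemma nth_body: "k < 2 * length e \<Longrightarrow> body e ! k =
   (if even k then sym_rank (e ! (k div 2)) else sym_rank (letter_inv (e ! (k div 2))))"
proof (induction e arbitrary: k)
  case (Cons a e)
  show ?case
  proof (cases k)
    case (Suc k')
    then show ?thesis
    proof (cases k')
      case (Suc k'')
      then show ?thesis using Cons \<open>k = Suc k'\<close> by (auto simp: body_Cons)
    qed (auto simp: body_Cons)
  qed (auto simp: body_Cons)
qed simp

lemma wh_body: "whitehead_expansion n e = 0 # body e @ [2*n+1]"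
  by (simp add: whitehead_expansion_def body_def)

lemma length_wh: "length (whitehead_expansion n e) = 2 * length e + 2"
  by (simp add: wh_body length_body)

definition cv :: "nat \<Rightarrow> letter list \<Rightarrow> nat \<Rightarrow> nat" where
  "cv n e k = whitehead_expansion n e ! (k - 1)"

lemma cv_1: "cv n e 1 = 0" by (simp add: cv_def wh_body)

lemma cv_last: "cv n e (2 * length e + 2) = 2*n+1"
  by (simp add: cv_def wh_body nth_append length_body)

lemma cv_even: "1 \<le> l \<Longrightarrow> l \<le> length e \<Longrightarrow> cv n e (2*l) = sym_rank (e ! (l-1))"
proof -
  assume a: "1 \<le> l" "l \<le> length e"
  have eq: "2*l - 1 = Suc (2*l-2)" using a by simp
  have "cv n e (2*l) = (0 # body e @ [2*n+1]) ! Suc (2*l-2)"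
    unfolding cv_def wh_body eq ..
  also have "\<dots> = body e ! (2*l - 2)"
    using a by (simp add: nth_append length_body del: One_nat_def) linarith
  also have "\<dots> = sym_rank (e ! (l-1))"
  proof -
    have d: "(2*l-2) div 2 = l-1" "even (2*l-2)" "2*l-2 < 2 * length e" using a by auto
    show ?thesis using nth_body[OF d(3)] d(1,2) by simp
  qed
  finally show ?thesis .
qed


lemma cv_odd: "1 \<le> l \<Longrightarrow> l \<le> length e \<Longrightarrow> cv n e (2*l+1) = sym_rank (letter_inv (e ! (l-1)))"
proof -
  assume a: "1 \<le> l" "l \<le> length e"
  have "cv n e (2*l+1) = body e ! (2*l - 1)"
    using a by (simp add: cv_def wh_body nth_append length_body nth_Cons split: nat.splits)
  also have "\<dots> = sym_rank (letter_inv (e ! (l-1)))"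
  proof -
    have d: "(2*l-1) div 2 = l-1" "odd (2*l-1)" "2*l-1 < 2 * length e" using a by auto
    show ?thesis using nth_body[OF d(3)] d(1,2) by simp
  qed
  finally show ?thesis .
qed




definition planarI :: "nat list \<Rightarrow> bool" where
  "planarI c \<longleftrightarrow> even (length c) \<and>
    (let M = length c div 2 in
     \<exists>\<pi> :: nat \<Rightarrow> int. inj_on \<pi> {1..2*M} \<and>
       (\<forall>i\<in>{1..2*M}. \<forall>j\<in>{1..2*M}. \<pi> i < \<pi> j \<longrightarrow> c ! (i - 1) \<le> c ! (j - 1)) \<and>
       (\<forall>i\<in>{1..M}. \<forall>j\<in>{1..M}. i \<noteq> j \<longrightarrow>
          nested_pair (\<pi> (2*i-1)) (\<pi> (2*i)) (\<pi> (2*j-1)) (\<pi> (2*j))) \<and>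
       (\<forall>i\<in>{1..M-1}. \<forall>j\<in>{1..M-1}. i \<noteq> j \<longrightarrow>
          nested_pair (\<pi> (2*i)) (\<pi> (2*i+1)) (\<pi> (2*j)) (\<pi> (2*j+1))))"

lemma planar_to_I: "planar_tuple c \<Longrightarrow> planarI c"
proof -
  assume p: "planar_tuple c"
  define M where "M = length c div 2"
  have ev: "even (length c)" using p unfolding planar_tuple_def by simp
  obtain \<pi> :: "nat \<Rightarrow> nat" where h: "bij_betw \<pi> {1..2 * M} {1..2 * M}"
    "\<forall>i\<in>{1..2 * M}. \<forall>j\<in>{1..2 * M}. \<pi> i < \<pi> j \<longrightarrow> c ! (i - 1) \<le> c ! (j - 1)"
    "\<forall>i\<in>{1..M}. \<forall>j\<in>{1..M}. i \<noteq> j \<longrightarrow>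
       nested_pair (int (\<pi> (2 * i - 1))) (int (\<pi> (2 * i))) (int (\<pi> (2 * j - 1))) (int (\<pi> (2 * j)))"
    "\<forall>i\<in>{1..M - 1}. \<forall>j\<in>{1..M - 1}. i \<noteq> j \<longrightarrow>
       nested_pair (int (\<pi> (2 * i))) (int (\<pi> (2 * i + 1))) (int (\<pi> (2 * j))) (int (\<pi> (2 * j + 1)))"
    using p unfolding planar_tuple_def Let_def M_def by blast
  have i1: "inj_on (\<lambda>i. int (\<pi> i)) {1..2 * M}"
  proof (rule inj_onI)
    fix x y assume xy: "x \<in> {1..2*M}" "y \<in> {1..2*M}" "int (\<pi> x) = int (\<pi> y)"
    then have "\<pi> x = \<pi> y" by simp
    then show "x = y" using inj_onD[OF bij_betw_imp_inj_on[OF h(1)]] xy(1,2) by blast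
  qed
  have i2: "\<forall>i\<in>{1..2 * M}. \<forall>j\<in>{1..2 * M}. int (\<pi> i) < int (\<pi> j) \<longrightarrow> c ! (i - 1) \<le> c ! (j - 1)"
      using h(2) by (simp only: of_nat_less_iff)
  show ?thesis unfolding planarI_def Let_def M_def[symmetric]
    using ev i1 i2 h(3,4) by blast
qed




lemma compress:
  fixes S :: "int set"
  assumes "finite S"
  shows "\<exists>h::int\<Rightarrow>nat. strict_mono_on S h \<and> h ` S = {1..card S}"
proof -
  define h where "h x = card {y\<in>S. y \<le> x}" for x
  have sm: "strict_mono_on S h"
  proof (rule strict_mono_onI)
    fix x y assume xy: "x \<in> S" "y \<in> S" "x < y"
    have "{z\<in>S. z \<le> x} \<subseteq> {z\<in>S. z \<le> y}" using xy by auto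
    moreover have "y \<notin> {z\<in>S. z \<le> x}" "y \<in> {z\<in>S. z \<le> y}" using xy by auto
    ultimately have "{z\<in>S. z \<le> x} \<subset> {z\<in>S. z \<le> y}" by blast
    then show "h x < h y" unfolding h_def by (rule psubset_card_mono[rotated]) (use assms in auto)
  qed
  have sub: "h ` S \<subseteq> {1..card S}"
  proof
    fix z assume "z \<in> h ` S"
    then obtain x where x: "x \<in> S" "z = h x" by auto
    have "{y\<in>S. y \<le> x} \<noteq> {}" using x by auto
    then have "1 \<le> h x" unfolding h_def using assms by (simp add: Suc_le_eq card_gt_0_iff)
    moreover have "h x \<le> card S" unfolding h_def by (rule card_mono) (use assms in auto)
    ultimately show "z \<in> {1..card S}" using x by auto
  qed
  have "card (h ` S) = card S" using card_image[OF strict_mono_on_imp_inj_on[OF sm]] .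
  then have "h ` S = {1..card S}" using sub by (intro card_subset_eq) auto
  then show ?thesis using sm by blast
qed

lemma nested_mono:
  fixes g :: "int \<Rightarrow> nat"
  assumes "strict_mono_on S g" "a \<in> S" "b \<in> S" "c \<in> S" "d \<in> S"
  shows "nested_pair (int (g a)) (int (g b)) (int (g c)) (int (g d)) = nested_pair a b c d"
proof -
  have lt: "\<And>x y. x \<in> S \<Longrightarrow> y \<in> S \<Longrightarrow> (int (g x) < int (g y)) = (x < y)"
    using strict_mono_on_less[OF assms(1)] by simp
  have eq: "\<And>x y. x \<in> S \<Longrightarrow> y \<in> S \<Longrightarrow> (int (g x) = int (g y)) = (x = y)"
    using strict_mono_on_imp_inj_on[OF assms(1)] unfolding inj_on_def by auto
  show ?thesis unfolding nested_xor using assms(2-5) lt eq by simp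
qed

lemma I_to_planar: "planarI c \<Longrightarrow> planar_tuple c"
proof -
  assume p: "planarI c"
  define M where "M = length c div 2"
  have ev: "even (length c)" using p unfolding planarI_def by simp
  obtain \<pi> :: "nat \<Rightarrow> int" where h: "inj_on \<pi> {1..2 * M}"
    "\<forall>i\<in>{1..2 * M}. \<forall>j\<in>{1..2 * M}. \<pi> i < \<pi> j \<longrightarrow> c ! (i - 1) \<le> c ! (j - 1)"
    "\<forall>i\<in>{1..M}. \<forall>j\<in>{1..M}. i \<noteq> j \<longrightarrow>
       nested_pair (\<pi> (2 * i - 1)) (\<pi> (2 * i)) (\<pi> (2 * j - 1)) (\<pi> (2 * j))"
    "\<forall>i\<in>{1..M - 1}. \<forall>j\<in>{1..M - 1}. i \<noteq> j \<longrightarrow>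
       nested_pair (\<pi> (2 * i)) (\<pi> (2 * i + 1)) (\<pi> (2 * j)) (\<pi> (2 * j + 1))"
    using p unfolding planarI_def Let_def M_def by blast
  define S where "S = \<pi> ` {1..2*M}"
  have cS: "card S = 2*M" unfolding S_def using card_image[OF h(1)] by simp
  obtain g where g: "strict_mono_on S g" "g ` S = {1..2*M}"
    using compress[of S] cS unfolding S_def by auto
  have inS: "\<And>i. i \<in> {1..2*M} \<Longrightarrow> \<pi> i \<in> S" unfolding S_def by auto
  define \<rho> where "\<rho> i = g (\<pi> i)" for i
  have b: "bij_betw \<rho> {1..2*M} {1..2*M}"
    unfolding bij_betw_def \<rho>_def
  proof
    show "inj_on (\<lambda>i. g (\<pi> i)) {1..2 * M}"
      using comp_inj_on[OF h(1), of g] strict_mono_on_imp_inj_on[OF g(1)]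
      unfolding S_def by (simp add: o_def)
    show "(\<lambda>i. g (\<pi> i)) ` {1..2 * M} = {1..2 * M}" using g(2) unfolding S_def by (simp add: image_image)
  qed
  have m: "\<forall>i\<in>{1..2 * M}. \<forall>j\<in>{1..2 * M}. \<rho> i < \<rho> j \<longrightarrow> c ! (i - 1) \<le> c ! (j - 1)"
  proof (intro ballI impI)
    fix i j assume ij: "i \<in> {1..2*M}" "j \<in> {1..2*M}" "\<rho> i < \<rho> j"
    then have "\<pi> i < \<pi> j" unfolding \<rho>_def using strict_mono_on_less[OF g(1) inS[OF ij(1)] inS[OF ij(2)]] by simp
    then show "c ! (i - 1) \<le> c ! (j - 1)" using h(2) ij by blast
  qed
  have n1: "\<forall>i\<in>{1..M}. \<forall>j\<in>{1..M}. i \<noteq> j \<longrightarrow>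
       nested_pair (int (\<rho> (2 * i - 1))) (int (\<rho> (2 * i))) (int (\<rho> (2 * j - 1))) (int (\<rho> (2 * j)))"
  proof (intro ballI impI)
    fix i j assume ij: "i \<in> {1..M}" "j \<in> {1..M}" "i \<noteq> j"
    then have a: "\<pi> (2*i-1) \<in> S" "\<pi> (2*i) \<in> S" "\<pi> (2*j-1) \<in> S" "\<pi> (2*j) \<in> S" by (auto intro!: inS)
    have "nested_pair (\<pi> (2*i-1)) (\<pi> (2*i)) (\<pi> (2*j-1)) (\<pi> (2*j))" using h(3) ij by blast
    then show "nested_pair (int (\<rho> (2 * i - 1))) (int (\<rho> (2 * i))) (int (\<rho> (2 * j - 1))) (int (\<rho> (2 * j)))"
      unfolding \<rho>_def by (simp only: nested_mono[OF g(1) a])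
  qed
  have n2: "\<forall>i\<in>{1..M-1}. \<forall>j\<in>{1..M-1}. i \<noteq> j \<longrightarrow>
       nested_pair (int (\<rho> (2 * i))) (int (\<rho> (2 * i + 1))) (int (\<rho> (2 * j))) (int (\<rho> (2 * j + 1)))"
  proof (intro ballI impI)
    fix i j assume ij: "i \<in> {1..M-1}" "j \<in> {1..M-1}" "i \<noteq> j"
    then have a: "\<pi> (2*i) \<in> S" "\<pi> (2*i+1) \<in> S" "\<pi> (2*j) \<in> S" "\<pi> (2*j+1) \<in> S" by (auto intro!: inS)
    have "nested_pair (\<pi> (2*i)) (\<pi> (2*i+1)) (\<pi> (2*j)) (\<pi> (2*j+1))" using h(4) ij by blast
    then show "nested_pair (int (\<rho> (2 * i))) (int (\<rho> (2 * i + 1))) (int (\<rho> (2 * j))) (int (\<rho> (2 * j + 1)))"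
      unfolding \<rho>_def by (simp only: nested_mono[OF g(1) a])
  qed
  show ?thesis unfolding planar_tuple_def Let_def M_def[symmetric]
    using ev b m n1 n2 by blast
qed




lemma rank_bounds: "1 \<le> fst a \<Longrightarrow> fst a \<le> n \<Longrightarrow> 1 \<le> sym_rank a \<and> sym_rank a \<le> 2*n"
  unfolding sym_rank_def by auto

lemma rank_inv_ne: "1 \<le> fst a \<Longrightarrow> sym_rank (letter_inv a) \<noteq> sym_rank a"
  unfolding sym_rank_def letter_inv_def by auto

lemma fst_inv[simp]: "fst (letter_inv a) = fst a"
  unfolding letter_inv_def by simp

lemma rank_inj: "1 \<le> fst a \<Longrightarrow> 1 \<le> fst b \<Longrightarrow> sym_rank a = sym_rank b \<Longrightarrow> a = b"
  unfolding sym_rank_def by (cases a; cases b) (auto split: if_splits; presburger)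

lemma cyc4: "q \<notin> {a,b,c,d} \<Longrightarrow>
  (strictly_between a d q \<noteq> strictly_between b c q) = (strictly_between a b q \<noteq> strictly_between c d q)"
  using sb_xor[of q a d] sb_xor[of q b c] sb_xor[of q a b] sb_xor[of q c d] by auto

lemma sb_abs: "strictly_between a b x \<Longrightarrow> strictly_between a b y \<Longrightarrow> \<bar>x - y\<bar> < \<bar>a - b\<bar>"
  unfolding strictly_between_def by auto

locale cset =
  fixes n :: nat and e :: "letter list" and P :: "nat \<Rightarrow> int" and j :: nat
  assumes ex: "\<forall>a\<in>set e. 1 \<le> fst a \<and> fst a \<le> n"
  and inj: "inj_on P {1..2*length e+2}"
  and mono: "\<forall>i\<in>{1..2*length e+2}. \<forall>k\<in>{1..2*length e+2}. P i < P k \<longrightarrow> cv n e i \<le> cv n e k"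
  and U: "\<forall>i\<in>{1..length e+1}. \<forall>k\<in>{1..length e+1}. i \<noteq> k \<longrightarrow>
            nested_pair (P (2*i-1)) (P (2*i)) (P (2*k-1)) (P (2*k))"
  and D: "\<forall>i\<in>{1..length e}. \<forall>k\<in>{1..length e}. i \<noteq> k \<longrightarrow>
            nested_pair (P (2*i)) (P (2*i+1)) (P (2*k)) (P (2*k+1))"
  and cj: "1 \<le> j" "j < length e" "e ! j = letter_inv (e ! (j-1))"
begin

abbreviation "m \<equiv> length e"
abbreviation "sbA q \<equiv> strictly_between (P (2*j)) (P (2*j+3)) q"
abbreviation "sbB q \<equiv> strictly_between (P (2*j+1)) (P (2*j+2)) q"
abbreviation "sAB q \<equiv> strictly_between (P (2*j)) (P (2*j+1)) q"
abbreviation "sCD q \<equiv> strictly_between (P (2*j+2)) (P (2*j+3)) q"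
abbreviation "c \<equiv> cv n e"

lemma Ur: "i \<in> {1..m+1} \<Longrightarrow> k \<in> {1..m+1} \<Longrightarrow> i \<noteq> k \<Longrightarrow>
  nested_pair (P (2*i-1)) (P (2*i)) (P (2*k-1)) (P (2*k))"
  using U by blast
lemma Dr: "i \<in> {1..m} \<Longrightarrow> k \<in> {1..m} \<Longrightarrow> i \<noteq> k \<Longrightarrow>
  nested_pair (P (2*i)) (P (2*i+1)) (P (2*k)) (P (2*k+1))"
  using D by blast

lemma valid: "l < m \<Longrightarrow> 1 \<le> fst (e ! l) \<and> fst (e ! l) \<le> n"
  using ex nth_mem by blast

lemma cE: "1 \<le> l \<Longrightarrow> l \<le> m \<Longrightarrow> c (2*l) = sym_rank (e ! (l-1))"
  by (rule cv_even)
lemma cO: "1 \<le> l \<Longrightarrow> l \<le> m \<Longrightarrow> c (2*l+1) = sym_rank (letter_inv (e ! (l-1)))"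
  by (rule cv_odd)

lemma c_range: "1 \<le> l \<Longrightarrow> l \<le> 2*m+1 \<Longrightarrow> 2 \<le> l \<Longrightarrow> 1 \<le> c l \<and> c l \<le> 2*n"
proof -
  assume l: "1 \<le> l" "l \<le> 2*m+1" "2 \<le> l"
  show ?thesis
  proof (cases "even l")
    case True
    then obtain h where h: "l = 2*h" by blast
    have hb: "1 \<le> h" "h \<le> m" using l h by auto
    have "c l = sym_rank (e ! (h-1))" using cE[of h] hb h by simp
    moreover have "1 \<le> fst (e!(h-1)) \<and> fst (e!(h-1)) \<le> n" using valid[of "h-1"] hb by simp
    ultimately show ?thesis using rank_bounds[of "e!(h-1)" n] by simp
  next
    case False
    then obtain h where h: "l = 2*h+1" by (metis oddE)
    have hb: "1 \<le> h" "h \<le> m" using l h by auto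
    have "c l = sym_rank (letter_inv (e ! (h-1)))" using cO[of h] hb h by simp
    moreover have "1 \<le> fst (e!(h-1)) \<and> fst (e!(h-1)) \<le> n" using valid[of "h-1"] hb by simp
    ultimately show ?thesis using rank_bounds[of "letter_inv (e!(h-1))" n] by simp
  qed
qed

lemma c_first: "c 1 = 0" by (rule cv_1)
lemma c_last: "c (2*m+2) = 2*n+1" by (rule cv_last)

lemma inrange: "k \<in> {1..2*m+2} \<Longrightarrow> 1 \<le> c k \<Longrightarrow> c k \<le> 2*n \<Longrightarrow> 2 \<le> k \<and> k \<le> 2*m+1"
proof -
  assume k: "k \<in> {1..2*m+2}" "1 \<le> c k" "c k \<le> 2*n"
  have "k \<noteq> 1" using k c_first by auto
  moreover have "k \<noteq> 2*m+2" using k c_last by auto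
  ultimately show ?thesis using k by auto
qed

definition "r = sym_rank (e ! (j-1))"
definition "s = sym_rank (letter_inv (e ! (j-1)))"

lemma rs: "r \<noteq> s" "c (2*j) = r" "c (2*j+1) = s" "c (2*j+2) = s" "c (2*j+3) = r"
proof -
  have v: "1 \<le> fst (e ! (j-1))" using valid[of "j-1"] cj by simp
  show "r \<noteq> s" unfolding r_def s_def using rank_inv_ne[OF v] by simp
  show "c (2*j) = r" unfolding r_def using cE[of j] cj by simp
  show "c (2*j+1) = s" unfolding s_def using cO[of j] cj by simp
  have e2: "2*(j+1) = 2*j+2" by simp
  show "c (2*j+2) = s" unfolding s_def using cE[of "j+1"] cj unfolding e2 by simp
  have e: "2*(j+1)+1 = 2*j+3" by simp
  show "c (2*j+3) = r" unfolding r_def using cO[of "j+1"] cj unfolding e by simp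
qed

lemma Pinj: "x \<in> {1..2*m+2} \<Longrightarrow> y \<in> {1..2*m+2} \<Longrightarrow> P x = P y \<Longrightarrow> x = y"
  using inj unfolding inj_on_def by blast

lemma valA: "k \<in> {1..2*m+2} \<Longrightarrow> sbA (P k) \<Longrightarrow> c k = r"
proof -
  assume k: "k \<in> {1..2*m+2}" "sbA (P k)"
  have i: "2*j \<in> {1..2*m+2}" "2*j+3 \<in> {1..2*m+2}" using cj by auto
  show ?thesis
  proof (cases "P (2*j) < P (2*j+3)")
    case True
    then have l: "P (2*j) < P k" "P k < P (2*j+3)" using k unfolding strictly_between_def by auto
    have "c (2*j) \<le> c k" using mono[rule_format, OF i(1) k(1) l(1)] .
    moreover have "c k \<le> c (2*j+3)" using mono[rule_format, OF k(1) i(2) l(2)] .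
    ultimately show ?thesis using rs by simp
  next
    case False
    then have l: "P (2*j+3) < P k" "P k < P (2*j)" using k unfolding strictly_between_def by auto
    have "c (2*j+3) \<le> c k" using mono[rule_format, OF i(2) k(1) l(1)] .
    moreover have "c k \<le> c (2*j)" using mono[rule_format, OF k(1) i(1) l(2)] .
    ultimately show ?thesis using rs by simp
  qed
qed

lemma valB: "k \<in> {1..2*m+2} \<Longrightarrow> sbB (P k) \<Longrightarrow> c k = s"
proof -
  assume k: "k \<in> {1..2*m+2}" "sbB (P k)"
  have i: "2*j+1 \<in> {1..2*m+2}" "2*j+2 \<in> {1..2*m+2}" using cj by auto
  show ?thesis
  proof (cases "P (2*j+1) < P (2*j+2)")
    case True
    then have l: "P (2*j+1) < P k" "P k < P (2*j+2)" using k unfolding strictly_between_def by auto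
    have "c (2*j+1) \<le> c k" using mono[rule_format, OF i(1) k(1) l(1)] .
    moreover have "c k \<le> c (2*j+2)" using mono[rule_format, OF k(1) i(2) l(2)] .
    ultimately show ?thesis using rs by simp
  next
    case False
    then have l: "P (2*j+2) < P k" "P k < P (2*j+1)" using k unfolding strictly_between_def by auto
    have "c (2*j+2) \<le> c k" using mono[rule_format, OF i(2) k(1) l(1)] .
    moreover have "c k \<le> c (2*j+1)" using mono[rule_format, OF k(1) i(1) l(2)] .
    ultimately show ?thesis using rs by simp
  qed
qed

lemma cyc: "k \<in> {1..2*m+2} \<Longrightarrow> k \<notin> {2*j, 2*j+1, 2*j+2, 2*j+3} \<Longrightarrow>
   (sbA (P k) \<noteq> sbB (P k)) = (sAB (P k) \<noteq> sCD (P k))"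
proof -
  assume k: "k \<in> {1..2*m+2}" "k \<notin> {2*j, 2*j+1, 2*j+2, 2*j+3}"
  have i: "2*j \<in> {1..2*m+2}" "2*j+1 \<in> {1..2*m+2}" "2*j+2 \<in> {1..2*m+2}" "2*j+3 \<in> {1..2*m+2}"
    using cj by auto
  have "P k \<noteq> P (2*j)" using Pinj[OF k(1) i(1)] k(2) by blast
  moreover have "P k \<noteq> P (2*j+1)" using Pinj[OF k(1) i(2)] k(2) by blast
  moreover have "P k \<noteq> P (2*j+2)" using Pinj[OF k(1) i(3)] k(2) by blast
  moreover have "P k \<noteq> P (2*j+3)" using Pinj[OF k(1) i(4)] k(2) by blast
  ultimately have "P k \<notin> {P (2*j), P (2*j+1), P (2*j+2), P (2*j+3)}" by blast
  then show ?thesis by (rule cyc4)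
qed

lemma Dn: "d \<in> {1..m} \<Longrightarrow> d \<noteq> j \<Longrightarrow> d \<noteq> j+1 \<Longrightarrow>
   sAB (P (2*d)) = sAB (P (2*d+1)) \<and> sCD (P (2*d)) = sCD (P (2*d+1))"
proof -
  assume d: "d \<in> {1..m}" "d \<noteq> j" "d \<noteq> j+1"
  have j1: "j \<in> {1..m}" "j+1 \<in> {1..m}" using cj by auto
  have "nested_pair (P (2*j)) (P (2*j+1)) (P (2*d)) (P (2*d+1))" using Dr[of j d] d j1 by blast
  moreover have "nested_pair (P (2*j+2)) (P (2*j+3)) (P (2*d)) (P (2*d+1))"
  proof -
    have e: "2*(j+1) = 2*j+2" "2*(j+1)+1 = 2*j+3" by simp_all
    show ?thesis using Dr[of "j+1" d] d j1 by (simp add: eval_nat_numeral)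
  qed
  ultimately show ?thesis using nested_sb by blast
qed

lemma Un: "u \<in> {1..m+1} \<Longrightarrow> u \<noteq> j+1 \<Longrightarrow> sbB (P (2*u-1)) = sbB (P (2*u))"
proof -
  assume u: "u \<in> {1..m+1}" "u \<noteq> j+1"
  have j1: "j+1 \<in> {1..m+1}" using cj by auto
  have e: "2*(j+1)-1 = 2*j+1" "2*(j+1) = 2*j+2" by simp_all
  have "nested_pair (P (2*j+1)) (P (2*j+2)) (P (2*u-1)) (P (2*u))" using Ur[of "j+1" u] u j1 by simp
  then show ?thesis using nested_sb by blast
qed


lemma Dn': "d \<in> {1..m} \<Longrightarrow> d \<noteq> j \<Longrightarrow> d \<noteq> j+1 \<Longrightarrow> x = 2*d \<Longrightarrow> y = 2*d+1 \<Longrightarrow>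
   (sAB (P x) \<noteq> sCD (P x)) = (sAB (P y) \<noteq> sCD (P y))"
  using Dn by blast
lemma Un': "u \<in> {1..m+1} \<Longrightarrow> u \<noteq> j+1 \<Longrightarrow> x = 2*u-1 \<Longrightarrow> y = 2*u \<Longrightarrow> sbB (P x) = sbB (P y)"
  using Un by blast
lemma cE': "1 \<le> l \<Longrightarrow> l \<le> m \<Longrightarrow> x = 2*l \<Longrightarrow> c x = sym_rank (e ! (l-1))"
  using cE by blast
lemma cO': "1 \<le> l \<Longrightarrow> l \<le> m \<Longrightarrow> x = 2*l+1 \<Longrightarrow> c x = sym_rank (letter_inv (e ! (l-1)))"
  using cO by blast
lemma nA: "x \<in> {1..2*m+2} \<Longrightarrow> c x \<noteq> r \<Longrightarrow> \<not> sbA (P x)"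
  using valA by blast
lemma nB: "x \<in> {1..2*m+2} \<Longrightarrow> c x \<noteq> s \<Longrightarrow> \<not> sbB (P x)"
  using valB by blast
lemma vfst: "l < m \<Longrightarrow> 1 \<le> fst (e ! l)"
  using valid by blast

lemma rsb: "1 \<le> r \<and> r \<le> 2*n" "1 \<le> s \<and> s \<le> 2*n"
proof -
  show "1 \<le> r \<and> r \<le> 2*n" using c_range[of "2*j"] rs(2) cj by simp
  show "1 \<le> s \<and> s \<le> 2*n" using c_range[of "2*j+1"] rs(3) cj by simp
qed

lemma walk:
  assumes k: "k \<in> {1..2*m+2}" and sk: "sbA (P k)"
  shows "\<exists>l. 1 \<le> l \<and> l < m \<and> e ! l = letter_inv (e ! (l-1)) \<and>
           \<bar>P (2*l) - P (2*l+3)\<bar> < \<bar>P (2*j) - P (2*j+3)\<bar>"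
proof -
  have ck: "c k = r" using valA k sk .
  have kr: "2 \<le> k \<and> k \<le> 2*m+1" using inrange k ck rsb by simp
  have nBk: "\<not> sbB (P k)" using nB[OF k] ck rs(1) by simp
  show ?thesis
  proof (cases "even k")
    case True
    then obtain l where kl: "k = 2*l" by blast
    have l1: "1 \<le> l" "l \<le> m" using kr kl by auto
    have lj: "l \<noteq> j" using sk kl sb_end by auto
    have lj1: "l \<noteq> j+1" using ck kl rs by auto
    have kn: "k \<notin> {2*j, 2*j+1, 2*j+2, 2*j+3}" using kl lj lj1 by auto
    have x0: "sAB (P k) \<noteq> sCD (P k)" using cyc[OF k kn] sk nBk by simp
    have x1: "sAB (P (2*l+1)) \<noteq> sCD (P (2*l+1))" using Dn'[of l k "2*l+1"] l1 lj lj1 x0 kl by simp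
    have r1: "2*l+1 \<in> {1..2*m+2}" using l1 by simp
    have cl: "c (2*l) = sym_rank (e ! (l-1))" using cE' l1 by simp
    have cl1: "c (2*l+1) = sym_rank (letter_inv (e ! (l-1)))" using cO' l1 by simp
    have q1r: "c (2*l+1) \<noteq> r" using cl cl1 ck kl rank_inv_ne[OF vfst[of "l-1"]] l1 by simp
    have q1A: "\<not> sbA (P (2*l+1))" using nA[OF r1 q1r] .
    have q1n: "2*l+1 \<notin> {2*j, 2*j+1, 2*j+2, 2*j+3}" using lj lj1 by auto
    have q1B: "sbB (P (2*l+1))" using cyc[OF r1 q1n] x1 q1A by simp
    have q2B: "sbB (P (2*l+2))" using Un'[of "l+1" "2*l+1" "2*l+2"] q1B l1 lj by simp
    have r2: "2*l+2 \<in> {1..2*m+2}" using l1 by simp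
    have c2: "c (2*l+2) = s" using valB[OF r2 q2B] .
    have l2: "l+1 \<le> m" using inrange[OF r2] c2 rsb by simp
    have c1: "c (2*l+1) = s" using valB[OF r1 q1B] .
    have cl2: "c (2*l+2) = sym_rank (e ! l)" using cE'[of "l+1" "2*l+2"] l2 by simp
    have canc: "e ! l = letter_inv (e ! (l-1))"
      using rank_inj[of "letter_inv (e ! (l-1))" "e ! l"] vfst[of "l-1"] vfst[of l] l1 l2 c1 cl1 c2 cl2
      by simp
    have lj0: "l+1 \<noteq> j" using c2 rs by auto
    have q2n: "2*l+2 \<notin> {2*j, 2*j+1, 2*j+2, 2*j+3}" using lj lj0 by auto
    have q2A: "\<not> sbA (P (2*l+2))" using nA[OF r2] c2 rs(1) by simp
    have x2: "sAB (P (2*l+2)) \<noteq> sCD (P (2*l+2))" using cyc[OF r2 q2n] q2A q2B by simp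
    have x3: "sAB (P (2*l+3)) \<noteq> sCD (P (2*l+3))"
      using Dn'[of "l+1" "2*l+2" "2*l+3"] l1 l2 lj lj0 x2 by simp
    have r3: "2*l+3 \<in> {1..2*m+2}" using l2 by simp
    have cl3: "c (2*l+3) = sym_rank (letter_inv (e ! l))" using cO'[of "l+1" "2*l+3"] l2 by simp
    have c3: "c (2*l+3) \<noteq> s" using cl3 cl2 c2 rank_inv_ne[OF vfst[of l]] l2 by simp
    have q3B: "\<not> sbB (P (2*l+3))" using nB[OF r3 c3] .
    have q3n: "2*l+3 \<notin> {2*j, 2*j+1, 2*j+2, 2*j+3}" using lj lj0 by auto
    have q3A: "sbA (P (2*l+3))" using cyc[OF r3 q3n] x3 q3B by simp
    show ?thesis using l1 l2 canc sb_abs[OF sk[unfolded kl] q3A] by (intro exI[of _ l]) simp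
  next
    case False
    have "k = 2*((k-3) div 2) + 3" using False kr by presburger
    then obtain l where kl: "k = 2*l+3" by blast
    have l1: "l+1 \<le> m" using kr kl by auto
    have lj: "l \<noteq> j" using sk kl sb_end by auto
    have lj0: "l+1 \<noteq> j"
    proof
      assume "l+1 = j" then have "k = 2*j+1" using kl by simp
      then show False using ck rs by simp
    qed
    have kn: "k \<notin> {2*j, 2*j+1, 2*j+2, 2*j+3}" using kl lj lj0 by auto
    have x0: "sAB (P k) \<noteq> sCD (P k)" using cyc[OF k kn] sk nBk by simp
    have x1: "sAB (P (2*l+2)) \<noteq> sCD (P (2*l+2))"
      using Dn'[of "l+1" "2*l+2" "2*l+3"] l1 lj lj0 x0 kl by simp
    have r2: "2*l+2 \<in> {1..2*m+2}" using l1 by simp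
    have cl2: "c (2*l+2) = sym_rank (e ! l)" using cE'[of "l+1" "2*l+2"] l1 by simp
    have cl3: "c (2*l+3) = sym_rank (letter_inv (e ! l))" using cO'[of "l+1" "2*l+3"] l1 by simp
    have q1r: "c (2*l+2) \<noteq> r" using cl2 cl3 ck kl rank_inv_ne[OF vfst[of l]] l1 by simp
    have q1A: "\<not> sbA (P (2*l+2))" using nA[OF r2 q1r] .
    have q1n: "2*l+2 \<notin> {2*j, 2*j+1, 2*j+2, 2*j+3}" using lj lj0 by auto
    have q1B: "sbB (P (2*l+2))" using cyc[OF r2 q1n] x1 q1A by simp
    have q2B: "sbB (P (2*l+1))" using Un'[of "l+1" "2*l+1" "2*l+2"] q1B l1 lj by simp
    have r1: "2*l+1 \<in> {1..2*m+2}" using l1 by simp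
    have c1: "c (2*l+1) = s" using valB[OF r1 q2B] .
    have c2: "c (2*l+2) = s" using valB[OF r2 q1B] .
    have l0: "1 \<le> l"
    proof (rule ccontr)
      assume "\<not> 1 \<le> l" then have "l = 0" by simp
      then show False using c1 c_first rsb by simp
    qed
    have cl1: "c (2*l+1) = sym_rank (letter_inv (e ! (l-1)))" using cO' l0 l1 by simp
    have canc: "e ! l = letter_inv (e ! (l-1))"
      using rank_inj[of "letter_inv (e ! (l-1))" "e ! l"] vfst[of "l-1"] vfst[of l] l0 l1 c1 cl1 c2 cl2
      by simp
    have lj1: "l \<noteq> j+1"
    proof
      assume "l = j+1" then have "2*l+1 = 2*j+3" by simp
      then have "c (2*l+1) = c (2*j+3)" by (simp only:)
      then show False using c1 rs(1) rs(5) by simp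
    qed
    have q2n: "2*l+1 \<notin> {2*j, 2*j+1, 2*j+2, 2*j+3}" using lj lj1 by auto
    have q2A: "\<not> sbA (P (2*l+1))" using nA[OF r1] c1 rs(1) by simp
    have x2: "sAB (P (2*l+1)) \<noteq> sCD (P (2*l+1))" using cyc[OF r1 q2n] q2A q2B by simp
    have x3: "sAB (P (2*l)) \<noteq> sCD (P (2*l))"
      using Dn'[of l "2*l" "2*l+1"] l0 l1 lj lj1 x2 by simp
    have r0: "2*l \<in> {1..2*m+2}" using l0 l1 by simp
    have cl: "c (2*l) = sym_rank (e ! (l-1))" using cE' l0 l1 by simp
    have lm: "l-1 < m" using l1 by simp
    have c0: "c (2*l) \<noteq> s" using cl cl1 c1 rank_inv_ne[OF vfst[OF lm]] by simp
    have q3B: "\<not> sbB (P (2*l))" using nB[OF r0 c0] .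
    have q3n: "2*l \<notin> {2*j, 2*j+1, 2*j+2, 2*j+3}" using lj lj1 by auto
    have q3A: "sbA (P (2*l))" using cyc[OF r0 q3n] x3 q3B by simp
    show ?thesis using l0 l1 canc sb_abs[OF q3A sk[unfolded kl]] by (intro exI[of _ l]) simp
  qed
qed

end



lemma length_del: "1 \<le> j \<Longrightarrow> j < length e \<Longrightarrow> length (take (j-1) e @ drop (j+1) e) = length e - 2"
  by simp

lemma nth_del: "1 \<le> j \<Longrightarrow> j < length e \<Longrightarrow> i < length e - 2 \<Longrightarrow>
  (take (j-1) e @ drop (j+1) e) ! i = (if i < j-1 then e ! i else e ! (i+2))"
  by (auto simp: nth_append)

lemma cv_del:
  assumes j: "1 \<le> j" "j < length e" and k: "k \<in> {1..2*(length e - 2)+2}"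
  shows "cv n (take (j-1) e @ drop (j+1) e) k = cv n e (if k \<le> 2*j-1 then k else k+4)"
proof -
  define e' where "e' = take (j-1) e @ drop (j+1) e"
  have le': "length e' = length e - 2" unfolding e'_def using j by simp
  consider "k = 1" | "k = 2*(length e - 2)+2" | "2 \<le> k \<and> k \<le> 2*(length e-2)+1" using k by force
  then have "cv n e' k = cv n e (if k \<le> 2*j-1 then k else k+4)"
  proof cases
    case 1
    have "k \<le> 2*j-1" using 1 j by simp
    then show ?thesis using 1 cv_1[of n e'] cv_1[of n e] by simp
  next
    case 2
    have eq: "k + 4 = 2 * length e + 2" using 2 j by simp
    have nle: "\<not> k \<le> 2*j-1" using 2 j by simp
    have A: "cv n e' k = 2*n+1"
    proof -
      have "k = 2*length e' + 2" using 2 le' by simp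
      then show ?thesis using cv_last by simp
    qed
    have B: "cv n e (k+4) = 2*n+1" unfolding eq by (rule cv_last)
    show ?thesis using A B nle by simp
  next
    case 3
    show ?thesis
    proof (cases "even k")
      case True
      then obtain l where kl: "k = 2*l" by blast
      have l: "1 \<le> l" "l \<le> length e - 2" using 3 kl by auto
      have c': "cv n e' k = sym_rank (e' ! (l-1))" using cv_even[of l e' n] l le' kl by simp
      show ?thesis
      proof (cases "l < j")
        case True
        have lt: "l - 1 < j - 1" "l - 1 < length e - 2" using True l by auto
        have "e' ! (l-1) = e ! (l-1)" unfolding e'_def using nth_del[OF j lt(2)] lt(1) by simp
        moreover have "k \<le> 2*j-1" using True kl by simp
        moreover have "cv n e k = sym_rank (e ! (l-1))" using cv_even[of l e n] l kl by simp
        ultimately show ?thesis using c' by simp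
      next
        case False
        have lt: "\<not> l - 1 < j - 1" "l - 1 < length e - 2" "l - 1 + 2 = l + 1" using False l by auto
        have "e' ! (l-1) = e ! (l+1)" unfolding e'_def using nth_del[OF j lt(2)] lt(1,3) by simp
        moreover have "\<not> k \<le> 2*j-1" using False kl j(1) by arith
        moreover have kk: "k+4 = 2*(l+2)" using kl by simp
        moreover have "cv n e (k+4) = sym_rank (e ! (l+1))" unfolding kk using cv_even[of "l+2" e n] l by simp
        ultimately show ?thesis using c' by simp
      qed
    next
      case False
      then obtain l where kl: "k = 2*l+1" by (metis oddE)
      have l: "1 \<le> l" "l \<le> length e - 2" using 3 kl by auto
      have c': "cv n e' k = sym_rank (letter_inv (e' ! (l-1)))" using cv_odd[of l e' n] l le' kl by simp
      show ?thesis
      proof (cases "l < j")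
        case True
        have lt: "l - 1 < j - 1" "l - 1 < length e - 2" using True l by auto
        have "e' ! (l-1) = e ! (l-1)" unfolding e'_def using nth_del[OF j lt(2)] lt(1) by simp
        moreover have "k \<le> 2*j-1" using True kl by simp
        moreover have "cv n e k = sym_rank (letter_inv (e ! (l-1)))" using cv_odd[of l e n] l kl by simp
        ultimately show ?thesis using c' by simp
      next
        case False
        have lt: "\<not> l - 1 < j - 1" "l - 1 < length e - 2" "l - 1 + 2 = l + 1" using False l by auto
        have "e' ! (l-1) = e ! (l+1)" unfolding e'_def using nth_del[OF j lt(2)] lt(1,3) by simp
        moreover have "\<not> k \<le> 2*j-1" using False kl by simp
        moreover have kk: "k+4 = 2*(l+2)+1" using kl by simp
        moreover have "cv n e (k+4) = sym_rank (letter_inv (e ! (l+1)))" unfolding kk using cv_odd[of "l+2" e n] l by simp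
        ultimately show ?thesis using c' by simp
      qed
    qed
  qed
  then show ?thesis unfolding e'_def .
qed

lemma shortcut: "q \<notin> {x,y,a,a'} \<Longrightarrow> \<not> strictly_between a a' q \<Longrightarrow>
   strictly_between x y q = (strictly_between x a q \<noteq> strictly_between a' y q)"
  using sb_xor[of q x y] sb_xor[of q x a] sb_xor[of q a' y] sb_xor[of q a a'] by auto

context cset begin

lemma Pne: "x \<in> {1..2*m+2} \<Longrightarrow> y \<in> {1..2*m+2} \<Longrightarrow> x \<noteq> y \<Longrightarrow> P x \<noteq> P y"
  using Pinj by blast

lemma Ur': "i \<in> {1..m+1} \<Longrightarrow> k \<in> {1..m+1} \<Longrightarrow> i \<noteq> k \<Longrightarrow> x = 2*i-1 \<Longrightarrow> y = 2*i \<Longrightarrow>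
  nested_pair (P x) (P y) (P (2*k-1)) (P (2*k))"
  using Ur by blast

lemma spec:
  assumes emp: "\<forall>k\<in>{1..2*m+2}. \<not> sbA (P k)"
  and t: "t \<in> {1..m+1}" "t \<noteq> j" "t \<noteq> j+1" "t \<noteq> j+2"
  shows "nested_pair (P (2*j-1)) (P (2*j+4)) (P (2*t-1)) (P (2*t))"
proof -
  have jr: "j \<in> {1..m+1}" "j+2 \<in> {1..m+1}" using cj by auto
  have n1: "nested_pair (P (2*j-1)) (P (2*j)) (P (2*t-1)) (P (2*t))" using Ur[OF jr(1) t(1) ] t by auto
  have n2: "nested_pair (P (2*j+3)) (P (2*j+4)) (P (2*t-1)) (P (2*t))"
    using Ur'[OF jr(2) t(1), of "2*j+3" "2*j+4"] t by simp
  have R: "2*j-1 \<in> {1..2*m+2}" "2*j \<in> {1..2*m+2}" "2*j+3 \<in> {1..2*m+2}" "2*j+4 \<in> {1..2*m+2}"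
     "2*t-1 \<in> {1..2*m+2}" "2*t \<in> {1..2*m+2}" using cj t by auto
  have d1: "P (2*t-1) \<notin> {P (2*j-1), P (2*j+4), P (2*j), P (2*j+3)}"
    using Pne[OF R(5) R(1)] Pne[OF R(5) R(4)] Pne[OF R(5) R(2)] Pne[OF R(5) R(3)] t cj by auto
  have d2: "P (2*t) \<notin> {P (2*j-1), P (2*j+4), P (2*j), P (2*j+3)}"
    using Pne[OF R(6) R(1)] Pne[OF R(6) R(4)] Pne[OF R(6) R(2)] Pne[OF R(6) R(3)] t cj by auto
  have e1: "\<not> sbA (P (2*t-1))" "\<not> sbA (P (2*t))" using emp R(5,6) by auto
  have dXY: "P (2*j-1) \<noteq> P (2*j+4)" using Pne[OF R(1) R(4)] by simp
  have "1 \<le> t" using t by simp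
  then have "2*t-1 \<noteq> 2*t" by arith
  then have dpz: "P (2*t-1) \<noteq> P (2*t)" using Pne[OF R(5) R(6)] by blast
  have s1: "strictly_between (P (2*j-1)) (P (2*j+4)) (P (2*t-1)) =
     (strictly_between (P (2*j-1)) (P (2*j)) (P (2*t-1)) \<noteq> strictly_between (P (2*j+3)) (P (2*j+4)) (P (2*t-1)))"
    using shortcut[OF d1 e1(1)] .
  have s2: "strictly_between (P (2*j-1)) (P (2*j+4)) (P (2*t)) =
     (strictly_between (P (2*j-1)) (P (2*j)) (P (2*t)) \<noteq> strictly_between (P (2*j+3)) (P (2*j+4)) (P (2*t)))"
    using shortcut[OF d2 e1(2)] .
  have dist: "distinct [P (2*j-1), P (2*j+4), P (2*t-1), P (2*t)]" using d1 d2 dXY dpz by auto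
  have eqv: "strictly_between (P (2*j-1)) (P (2*j+4)) (P (2*t-1)) = strictly_between (P (2*j-1)) (P (2*j+4)) (P (2*t))"
    by (simp only: s1 s2 nested_sb[OF n1] nested_sb[OF n2])
  show ?thesis unfolding nested_pair_def using dist eqv by blast
qed

end



context cset begin

lemma reduce:
  assumes emp: "\<forall>k\<in>{1..2*m+2}. \<not> sbA (P k)"
  shows "planarI (whitehead_expansion n (take (j-1) e @ drop (j+1) e))"
proof -
  define e' where "e' = take (j-1) e @ drop (j+1) e"
  define m' where "m' = m - 2"
  have jm: "1 \<le> j" "j < m" using cj by auto
  have le': "length e' = m'" unfolding e'_def m'_def using jm by simp
  have mm: "m' + 2 = m" unfolding m'_def using jm by simp
  define \<iota> where "\<iota> k = (if k \<le> 2*j-1 then k else k+4)" for k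
  define Q where "Q k = P (\<iota> k)" for k
  have len: "length (whitehead_expansion n e') = 2*m'+2" using length_wh le' by simp
  have Md: "length (whitehead_expansion n e') div 2 = m'+1" using len by simp
  have cvq: "\<And>k. k \<in> {1..2*m'+2} \<Longrightarrow> whitehead_expansion n e' ! (k-1) = cv n e (\<iota> k)"
    using cv_del[OF jm(1) jm(2)] unfolding e'_def \<iota>_def cv_def m'_def by simp
  have \<iota>r: "\<And>k. k \<in> {1..2*m'+2} \<Longrightarrow> \<iota> k \<in> {1..2*m+2}" unfolding \<iota>_def using mm by auto
  have \<iota>inj: "\<And>x y. \<iota> x = \<iota> y \<Longrightarrow> x = y" unfolding \<iota>_def using jm by (auto split: if_splits)
  have a: "inj_on Q {1..2*(m'+1)}"
  proof (rule inj_onI)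
    fix x y assume xy: "x \<in> {1..2*(m'+1)}" "y \<in> {1..2*(m'+1)}" "Q x = Q y"
    have "\<iota> x = \<iota> y" using Pinj[OF \<iota>r \<iota>r] xy unfolding Q_def by simp
    then show "x = y" by (rule \<iota>inj)
  qed
  have b: "\<forall>i\<in>{1..2*(m'+1)}. \<forall>k\<in>{1..2*(m'+1)}. Q i < Q k \<longrightarrow>
       whitehead_expansion n e' ! (i - 1) \<le> whitehead_expansion n e' ! (k - 1)"
  proof (intro ballI impI)
    fix i k assume ik: "i \<in> {1..2*(m'+1)}" "k \<in> {1..2*(m'+1)}" "Q i < Q k"
    have r: "i \<in> {1..2*m'+2}" "k \<in> {1..2*m'+2}" using ik by auto
    have "cv n e (\<iota> i) \<le> cv n e (\<iota> k)" using mono[rule_format, OF \<iota>r[OF r(1)] \<iota>r[OF r(2)]] ik(3)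
      unfolding Q_def by blast
    then show "whitehead_expansion n e' ! (i - 1) \<le> whitehead_expansion n e' ! (k - 1)"
      using cvq[OF r(1)] cvq[OF r(2)] by simp
  qed
  define ut where "ut i = (if i < j then i else i+2)" for i
  have uQ: "\<And>i. i \<in> {1..m'+1} \<Longrightarrow> i \<noteq> j \<Longrightarrow> Q (2*i-1) = P (2*ut i-1) \<and> Q (2*i) = P (2*ut i)"
  proof -
    fix i assume i: "i \<in> {1..m'+1}" "i \<noteq> j"
    show "Q (2*i-1) = P (2*ut i-1) \<and> Q (2*i) = P (2*ut i)"
    proof (cases "i < j")
      case True
      then have "\<iota> (2*i-1) = 2*i-1" "\<iota> (2*i) = 2*i" unfolding \<iota>_def by auto
      then show ?thesis unfolding Q_def ut_def using True by simp
    next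
      case False
      then have g: "i > j" using i by simp
      have "\<iota> (2*i-1) = 2*(i+2)-1" "\<iota> (2*i) = 2*(i+2)" unfolding \<iota>_def using g jm by auto
      then show ?thesis unfolding Q_def ut_def using False by simp
    qed
  qed
  have uJ: "Q (2*j-1) = P (2*j-1)" "Q (2*j) = P (2*j+4)" unfolding Q_def \<iota>_def using jm by auto
  have utr: "\<And>i. i \<in> {1..m'+1} \<Longrightarrow> i \<noteq> j \<Longrightarrow> ut i \<in> {1..m+1} \<and> ut i \<noteq> j \<and> ut i \<noteq> j+1 \<and> ut i \<noteq> j+2"
    unfolding ut_def using mm by auto
  have uti: "\<And>i k. i \<noteq> j \<Longrightarrow> k \<noteq> j \<Longrightarrow> i \<noteq> k \<Longrightarrow> ut i \<noteq> ut k"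
    unfolding ut_def by auto
  have c: "\<forall>i\<in>{1..m'+1}. \<forall>k\<in>{1..m'+1}. i \<noteq> k \<longrightarrow>
       nested_pair (Q (2*i-1)) (Q (2*i)) (Q (2*k-1)) (Q (2*k))"
  proof (intro ballI impI)
    fix i k assume ik: "i \<in> {1..m'+1}" "k \<in> {1..m'+1}" "i \<noteq> k"
    show "nested_pair (Q (2*i-1)) (Q (2*i)) (Q (2*k-1)) (Q (2*k))"
    proof (cases "i = j")
      case True
      then have kj: "k \<noteq> j" using ik by simp
      show ?thesis using spec[OF emp, of "ut k"] utr[OF ik(2) kj] uQ[OF ik(2) kj] uJ True by simp
    next
      case False
      note ij = False
      show ?thesis
      proof (cases "k = j")
        case True
        show ?thesis using nested_sym[OF spec[OF emp, of "ut i"]] utr[OF ik(1) ij] uQ[OF ik(1) ij] uJ True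
          by simp
      next
        case False
        have "nested_pair (P (2*ut i-1)) (P (2*ut i)) (P (2*ut k-1)) (P (2*ut k))"
          using Ur utr[OF ik(1) ij] utr[OF ik(2) False] uti[OF ij False ik(3)] by blast
        then show ?thesis using uQ[OF ik(1) ij] uQ[OF ik(2) False] by simp
      qed
    qed
  qed
  define dt where "dt i = (if i < j then i else i+2)" for i
  have dQ: "\<And>i. i \<in> {1..m'} \<Longrightarrow> Q (2*i) = P (2*dt i) \<and> Q (2*i+1) = P (2*dt i+1)"
  proof -
    fix i assume i: "i \<in> {1..m'}"
    show "Q (2*i) = P (2*dt i) \<and> Q (2*i+1) = P (2*dt i+1)"
    proof (cases "i < j")
      case True
      then have "\<iota> (2*i) = 2*i" "\<iota> (2*i+1) = 2*i+1" unfolding \<iota>_def by auto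
      then show ?thesis unfolding Q_def dt_def using True by simp
    next
      case False
      have "\<iota> (2*i) = 2*(i+2)" "\<iota> (2*i+1) = 2*(i+2)+1" unfolding \<iota>_def using False jm by auto
      then show ?thesis unfolding Q_def dt_def using False by simp
    qed
  qed
  have dtr: "\<And>i. i \<in> {1..m'} \<Longrightarrow> dt i \<in> {1..m}" unfolding dt_def using mm by auto
  have dti: "\<And>i k. i \<noteq> k \<Longrightarrow> dt i \<noteq> dt k" unfolding dt_def by auto
  have d: "\<forall>i\<in>{1..m'+1-1}. \<forall>k\<in>{1..m'+1-1}. i \<noteq> k \<longrightarrow>
       nested_pair (Q (2*i)) (Q (2*i+1)) (Q (2*k)) (Q (2*k+1))"
  proof (intro ballI impI)
    fix i k assume ik: "i \<in> {1..m'+1-1}" "k \<in> {1..m'+1-1}" "i \<noteq> k"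
    have ik': "i \<in> {1..m'}" "k \<in> {1..m'}" using ik by auto
    have "nested_pair (P (2*dt i)) (P (2*dt i+1)) (P (2*dt k)) (P (2*dt k+1))"
      using Dr[OF dtr[OF ik'(1)] dtr[OF ik'(2)] dti[OF ik(3)]] .
    then show "nested_pair (Q (2*i)) (Q (2*i+1)) (Q (2*k)) (Q (2*k+1))"
      using dQ[OF ik'(1)] dQ[OF ik'(2)] by simp
  qed
  have ev: "even (length (whitehead_expansion n e'))" using len by simp
  show ?thesis unfolding e'_def[symmetric] planarI_def Let_def Md
    using ev a b c d by blast
qed

end



lemma core:
  assumes ex: "expression_of n e" and pl: "planarI (whitehead_expansion n e)" and nr: "\<not> red e"
  shows "\<exists>e'. length e' < length e \<and> expression_of n e' \<and> freduce e' = freduce e \<and>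
              planarI (whitehead_expansion n e')"
proof -
  define m where "m = length e"
  have Md: "length (whitehead_expansion n e) div 2 = m+1" using length_wh unfolding m_def by simp
  obtain P :: "nat \<Rightarrow> int" where h: "inj_on P {1..2*(m+1)}"
    "\<forall>i\<in>{1..2*(m+1)}. \<forall>k\<in>{1..2*(m+1)}. P i < P k \<longrightarrow>
        whitehead_expansion n e ! (i - 1) \<le> whitehead_expansion n e ! (k - 1)"
    "\<forall>i\<in>{1..m+1}. \<forall>k\<in>{1..m+1}. i \<noteq> k \<longrightarrow>
       nested_pair (P (2 * i - 1)) (P (2 * i)) (P (2 * k - 1)) (P (2 * k))"
    "\<forall>i\<in>{1..m+1 - 1}. \<forall>k\<in>{1..m+1 - 1}. i \<noteq> k \<longrightarrow>
       nested_pair (P (2 * i)) (P (2 * i + 1)) (P (2 * k)) (P (2 * k + 1))"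
    using pl unfolding planarI_def Let_def Md by blast
  have s1: "{1..2*(m+1)} = {1..2*m+2}" by simp
  have s2: "{1..m+1-1} = {1..m}" by simp
  have exs: "\<forall>a\<in>set e. 1 \<le> fst a \<and> fst a \<le> n" using ex unfolding expression_of_def .
  have mono: "\<forall>i\<in>{1..2*m+2}. \<forall>k\<in>{1..2*m+2}. P i < P k \<longrightarrow> cv n e i \<le> cv n e k"
    using h(2) unfolding cv_def s1 .
  define canc where "canc j \<longleftrightarrow> 1 \<le> j \<and> j < m \<and> e ! j = letter_inv (e ! (j-1))" for j
  define span where "span j = nat \<bar>P (2*j) - P (2*j+3)\<bar>" for j
  obtain j0 where "canc j0" using not_red[OF nr] unfolding canc_def m_def by blast
  then obtain j where cj: "canc j" and mn: "\<forall>y. canc y \<longrightarrow> span j \<le> span y"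
    using ex_has_least_nat[of canc j0 span] by blast
  interpret cset n e P j
  proof
    show "\<forall>a\<in>set e. 1 \<le> fst a \<and> fst a \<le> n" by (rule exs)
    have "inj_on P {1..2*m+2}" using h(1) unfolding s1 .
    then show "inj_on P {1..2 * length e + 2}" unfolding m_def .
    show "\<forall>i\<in>{1..2 * length e + 2}. \<forall>k\<in>{1..2 * length e + 2}. P i < P k \<longrightarrow> cv n e i \<le> cv n e k"
      using mono unfolding m_def .
    show "\<forall>i\<in>{1..length e + 1}. \<forall>k\<in>{1..length e + 1}. i \<noteq> k \<longrightarrow>
            nested_pair (P (2 * i - 1)) (P (2 * i)) (P (2 * k - 1)) (P (2 * k))"
      using h(3) unfolding m_def .
    show "\<forall>i\<in>{1..length e}. \<forall>k\<in>{1..length e}. i \<noteq> k \<longrightarrow>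
            nested_pair (P (2 * i)) (P (2 * i + 1)) (P (2 * k)) (P (2 * k + 1))"
    proof -
      have "\<forall>i\<in>{1..m}. \<forall>k\<in>{1..m}. i \<noteq> k \<longrightarrow>
            nested_pair (P (2 * i)) (P (2 * i + 1)) (P (2 * k)) (P (2 * k + 1))" using h(4) by simp
      then show ?thesis unfolding m_def .
    qed
    show "1 \<le> j" "j < length e" "e ! j = letter_inv (e ! (j - 1))"
      using cj unfolding canc_def m_def by auto
  qed
  have emp: "\<forall>k\<in>{1..2*length e+2}. \<not> strictly_between (P (2*j)) (P (2*j+3)) (P k)"
  proof (intro ballI notI)
    fix k assume k: "k \<in> {1..2*length e+2}" "strictly_between (P (2*j)) (P (2*j+3)) (P k)"
    obtain l where l: "1 \<le> l" "l < length e" "e ! l = letter_inv (e ! (l-1))"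
      "\<bar>P (2*l) - P (2*l+3)\<bar> < \<bar>P (2*j) - P (2*j+3)\<bar>"
      using walk[OF k] by blast
    have "canc l" using l unfolding canc_def m_def by simp
    moreover have "span l < span j" using l(4) unfolding span_def by simp
    ultimately show False using mn by force
  qed
  define e' where "e' = take (j-1) e @ drop (j+1) e"
  have p': "planarI (whitehead_expansion n e')" unfolding e'_def using reduce[OF emp] .
  have j: "1 \<le> j" "j < length e" "e ! j = letter_inv (e ! (j - 1))" using cj unfolding canc_def m_def by auto
  have "length e' < length e" unfolding e'_def using j by simp
  moreover have "expression_of n e'"
  proof -
    have "set e' \<subseteq> set e" unfolding e'_def using set_take_subset set_drop_subset by fastforce
    then show ?thesis using exs unfolding expression_of_def by blast
  qed
  moreover have "freduce e' = freduce e"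
    using split_cancel[OF j] freduce_step[of "take (j-1) e" "e ! (j-1)" "drop (j+1) e"]
    unfolding e'_def by simp
  ultimately show ?thesis using p' by blast
qed

lemma mainI: "expression_of n e \<Longrightarrow> planarI (whitehead_expansion n e) \<Longrightarrow>
   planarI (whitehead_expansion n (freduce e))"
proof (induction "length e" arbitrary: e rule: less_induct)
  case less
  show ?case
  proof (cases "red e")
    case True then show ?thesis using less.prems freduce_red by simp
  next
    case False
    obtain e' where e': "length e' < length e" "expression_of n e'" "freduce e' = freduce e"
      "planarI (whitehead_expansion n e')"
      using core[OF less.prems False] by blast
    have "planarI (whitehead_expansion n (freduce e'))" using less.hyps[OF e'(1) e'(2) e'(4)] .
    then show ?thesis using e'(3) by simp
  qed
qed

theorem propositionA:
  fixes n :: nat and e :: "letter list"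
  assumes "expression_of n e"
    and "planar_expression n e"
  shows "planar_expression n (freduce e)"
  using assms I_to_planar mainI planar_to_I unfolding planar_expression_def by blast


end
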